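(* There is an absolute constant $C$ such that for every $n$ and every $0<B=B(n)<n$ there exists a subspace $\mathcal{M}\subseteq\mathbb{C}^{2^n}$ of dimension at least $2^B$ that is $(\mathcal{E}_{\mathrm{bitflip}},\varepsilon)$ immune with $\varepsilon\le C\,\frac{B\log n}{n}$.
   Context: $\mathbb{C}^{2^n}$ has standard basis $\{|x\rangle : x\in\{0,1\}^n\}$. For $i\in[n]$, $S\subseteq\{0,1\}^{n-1}$, $E_{i,S}$ is the linear operator with $E_{i,S}|x\rangle=|x\oplus e_i\rangle$ if $(x_1,\dots,x_{i-1},x_{i+1},\dots,x_n)\in S$ and $E_{i,S}|x\rangle=|x\rangle$ otherwise (a controlled bit flip of qubit $i$); $\mathcal{E}_{\mathrm{bitflip}}=\{E_{i,S}: i\in[n], S\subseteq\{0,1\}^{n-1}\}$. A subspace $\mathcal{M}$ is $(\mathcal{E},\varepsilon)$ immune if for every $X\in\mathcal{E}$ and every $\phi\in\mathcal{M}$, $|\phi^*X\phi|\ge(1-\varepsilon)|\phi^*\phi|$. *)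

theory Defs
  imports Complex_Main
begin

text \<open>Basis states |x>, x in {0,1}^n, are bool lists of length n (qubits indexed 0..n-1).
  A vector of C^(2^n) is a function bool list => complex vanishing outside length-n lists.\<close>

type_synonym qvec = "bool list \<Rightarrow> complex"

definition basis :: "nat \<Rightarrow> bool list set" where
  "basis n = {x. length x = n}"

definition is_qvec :: "nat \<Rightarrow> qvec \<Rightarrow> bool" where
  "is_qvec n \<phi> \<longleftrightarrow> (\<forall>x. length x \<noteq> n \<longrightarrow> \<phi> x = 0)"

definition is_subspace :: "nat \<Rightarrow> qvec set \<Rightarrow> bool" where
  "is_subspace n M \<longleftrightarrow> (\<forall>\<phi>\<in>M. is_qvec n \<phi>) \<and> (\<lambda>_. 0) \<in> M \<and>
     (\<forall>\<phi>\<in>M. \<forall>\<psi>\<in>M. (\<lambda>x. \<phi> x + \<psi> x) \<in> M) \<and>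
     (\<forall>c. \<forall>\<phi>\<in>M. (\<lambda>x. c * \<phi> x) \<in> M)"

definition dim_at_least :: "nat \<Rightarrow> qvec set \<Rightarrow> nat \<Rightarrow> bool" where
  "dim_at_least n M k \<longleftrightarrow> (\<exists>v :: nat \<Rightarrow> qvec. (\<forall>i<k. v i \<in> M) \<and>
     (\<forall>c :: nat \<Rightarrow> complex. (\<forall>x \<in> basis n. (\<Sum>i<k. c i * v i x) = 0) \<longrightarrow> (\<forall>i<k. c i = 0)))"

definition rest :: "nat \<Rightarrow> bool list \<Rightarrow> bool list" where
  "rest i x = take i x @ drop (Suc i) x"

definition flip_perm :: "nat \<Rightarrow> bool list set \<Rightarrow> bool list \<Rightarrow> bool list" where
  "flip_perm i S x = (if rest i x \<in> S then x[i := \<not> x ! i] else x)"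

text \<open>E_{i,S} acting on vectors: E|x> = |flip_perm x>, so (E phi)(y) = phi(flip_perm y)
  (flip_perm is an involution).\<close>
definition E_op :: "nat \<Rightarrow> bool list set \<Rightarrow> qvec \<Rightarrow> qvec" where
  "E_op i S \<phi> = (\<lambda>y. \<phi> (flip_perm i S y))"

definition E_bitflip :: "nat \<Rightarrow> (qvec \<Rightarrow> qvec) set" where
  "E_bitflip n = {E_op i S | i S. i < n \<and> S \<subseteq> basis (n - 1)}"

definition inner_q :: "nat \<Rightarrow> qvec \<Rightarrow> qvec \<Rightarrow> complex" where
  "inner_q n \<phi> \<psi> = (\<Sum>x\<in>basis n. cnj (\<phi> x) * \<psi> x)"

definition immune :: "nat \<Rightarrow> (qvec \<Rightarrow> qvec) set \<Rightarrow> real \<Rightarrow> qvec set \<Rightarrow> bool" where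
  "immune n \<E> \<epsilon> M \<longleftrightarrow> (\<forall>X\<in>\<E>. \<forall>\<phi>\<in>M.
     norm (inner_q n \<phi> (X \<phi>)) \<ge> (1 - \<epsilon>) * norm (inner_q n \<phi> \<phi>))"

end

theory Submission
  imports Defs
begin

definition sg :: "nat \<Rightarrow> bool list \<Rightarrow> real" where "sg k x = (if x ! k then -1 else 1)"
definition fl :: "nat \<Rightarrow> bool list \<Rightarrow> bool list" where "fl k x = x[k := \<not> x ! k]"
definition blk :: "nat \<Rightarrow> nat \<Rightarrow> nat set" where "blk m j = {j*m..<j*m+m}"
definition ff :: "nat \<Rightarrow> nat \<Rightarrow> bool list \<Rightarrow> real" where "ff m j x = (\<Sum>k\<in>blk m j. sg k x)"
definition RT :: "nat \<Rightarrow> nat set \<Rightarrow> bool list \<Rightarrow> real" where "RT m T x = (\<Prod>j\<in>T. ff m j x)"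
definition vT :: "nat \<Rightarrow> nat \<Rightarrow> nat set \<Rightarrow> qvec" where
  "vT n m T x = (if length x = n then complex_of_real (RT m T x) else 0)"
definition invar :: "nat \<Rightarrow> (bool list \<Rightarrow> 'a) \<Rightarrow> bool" where "invar k h \<longleftrightarrow> (\<forall>x. h (fl k x) = h x)"

lemma finite_basis: "finite (basis n)"
  unfolding basis_def by (rule finite_list_length)

lemma fl_len[simp]: "length (fl k x) = length x" by (simp add: fl_def)
lemma fl_fl[simp]: "fl k (fl k x) = x"
  by (cases "k < length x") (auto simp: fl_def list_update_beyond)
lemma sg_fl_neq: "k \<noteq> i \<Longrightarrow> sg i (fl k x) = sg i x" by (simp add: sg_def fl_def)
lemma sg_fl_eq: "i < length x \<Longrightarrow> sg i (fl i x) = - sg i x" by (simp add: sg_def fl_def)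
lemma sg_sq: "sg k x * sg k x = 1" by (simp add: sg_def)
lemma abs_sg: "\<bar>sg k x\<bar> = 1" by (simp add: sg_def)

lemma invar_sg: "k \<noteq> i \<Longrightarrow> invar k (sg i)" by (simp add: invar_def sg_fl_neq)
lemma invar_mult: "invar k a \<Longrightarrow> invar k b \<Longrightarrow> invar k (\<lambda>x. a x * b x)" by (simp add: invar_def)
lemma invar_sum: "(\<And>t. t \<in> A \<Longrightarrow> invar k (g t)) \<Longrightarrow> invar k (\<lambda>x. \<Sum>t\<in>A. g t x)"
  by (simp add: invar_def)
lemma invar_prod: "(\<And>t. t \<in> A \<Longrightarrow> invar k (g t)) \<Longrightarrow> invar k (\<lambda>x. \<Prod>t\<in>A. g t x)"
  by (simp add: invar_def)
lemma invar_ff: "k \<notin> blk m j \<Longrightarrow> invar k (ff m j)"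
  unfolding ff_def by (rule invar_sum) (auto intro: invar_sg)
lemma invar_RT: "(\<And>j. j \<in> T \<Longrightarrow> k \<notin> blk m j) \<Longrightarrow> invar k (RT m T)"
  unfolding RT_def by (rule invar_prod) (auto intro: invar_ff)
lemma invar_vT: "(\<And>j. j \<in> T \<Longrightarrow> k \<notin> blk m j) \<Longrightarrow> invar k (vT n m T)"
  using invar_RT[of T k m] by (simp add: invar_def vT_def)

lemma L1:
  assumes "i < n" "invar i h"
  shows "(\<Sum>x\<in>basis n. sg i x * h x) = 0"
proof -
  have "(\<Sum>x\<in>basis n. sg i x * h x) = (\<Sum>x\<in>basis n. sg i (fl i x) * h (fl i x))"
    by (rule sum.reindex_bij_witness[of _ "fl i" "fl i"]) (auto simp: basis_def)
  also have "\<dots> = (\<Sum>x\<in>basis n. - (sg i x * h x))"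
    using assms by (intro sum.cong) (auto simp: basis_def sg_fl_eq invar_def)
  also have "\<dots> = - (\<Sum>x\<in>basis n. sg i x * h x)" by (simp add: sum_negf)
  finally show ?thesis by simp
qed

lemma L2:
  assumes "blk m j \<subseteq> {..<n}" "\<And>k. k \<in> blk m j \<Longrightarrow> invar k h"
  shows "(\<Sum>x\<in>basis n. ff m j x * h x) = 0"
proof -
  have "(\<Sum>x\<in>basis n. ff m j x * h x) = (\<Sum>k\<in>blk m j. \<Sum>x\<in>basis n. sg k x * h x)"
    unfolding ff_def sum_distrib_right by (rule sum.swap)
  also have "\<dots> = 0" using assms by (intro sum.neutral ballI L1) auto
  finally show ?thesis .
qed

lemma L3:
  assumes "blk m j \<subseteq> {..<n}" "\<And>k. k \<in> blk m j \<Longrightarrow> invar k h"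
  shows "(\<Sum>x\<in>basis n. (ff m j x)^2 * h x) = real m * (\<Sum>x\<in>basis n. h x)"
proof -
  have "(\<Sum>x\<in>basis n. (ff m j x)^2 * h x)
      = (\<Sum>x\<in>basis n. \<Sum>k\<in>blk m j. \<Sum>k'\<in>blk m j. sg k x * (sg k' x * h x))"
    by (intro sum.cong refl) (simp add: ff_def power2_eq_square sum_distrib_left sum_distrib_right mult.assoc mult.left_commute)
  also have "\<dots> = (\<Sum>k\<in>blk m j. \<Sum>x\<in>basis n. \<Sum>k'\<in>blk m j. sg k x * (sg k' x * h x))"
    by (rule sum.swap)
  also have "\<dots> = (\<Sum>k\<in>blk m j. \<Sum>k'\<in>blk m j. \<Sum>x\<in>basis n. sg k x * (sg k' x * h x))"
    by (intro sum.cong refl sum.swap)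
  also have "\<dots> = (\<Sum>k\<in>blk m j. \<Sum>k'\<in>blk m j. if k' = k then (\<Sum>x\<in>basis n. h x) else 0)"
  proof (intro sum.cong refl)
    fix k k' assume k: "k \<in> blk m j" and k': "k' \<in> blk m j"
    show "(\<Sum>x\<in>basis n. sg k x * (sg k' x * h x)) = (if k' = k then (\<Sum>x\<in>basis n. h x) else 0)"
    proof (cases "k' = k")
      case True thus ?thesis by (simp add: mult.assoc[symmetric] sg_sq)
    next
      case False
      have "invar k (\<lambda>x. sg k' x * h x)"
        using False k assms(2) by (intro invar_mult invar_sg) auto
      thus ?thesis using False k assms(1) L1[of k n] by auto
    qed
  qed
  also have "\<dots> = real m * (\<Sum>x\<in>basis n. h x)" by (simp add: blk_def)
  finally show ?thesis .
qed


lemma rest_upd: "rest i (x[i := v]) = rest i x" by (simp add: rest_def)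

lemma fp_len[simp]: "length (flip_perm i S x) = length x" by (simp add: flip_perm_def)
lemma fp_fp[simp]: "flip_perm i S (flip_perm i S x) = x"
  by (cases "i < length x") (auto simp: flip_perm_def rest_upd list_update_beyond)
lemma fp_cases: "flip_perm i S x = x \<or> flip_perm i S x = fl i x"
  by (simp add: flip_perm_def fl_def)

lemma cmod_diff_sq: "(cmod (a - b))^2 = (cmod a)^2 + (cmod b)^2 - 2 * Re (cnj a * b)"
  by (simp only: cmod_power2) (simp add: power2_eq_square algebra_simps)

lemma inner_self: "inner_q n \<psi> \<psi> = complex_of_real (\<Sum>x\<in>basis n. (cmod (\<psi> x))^2)"
proof -
  have "inner_q n \<psi> \<psi> = (\<Sum>x\<in>basis n. complex_of_real ((cmod (\<psi> x))^2))"
    unfolding inner_q_def proof (intro sum.cong refl)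
    fix x show "cnj (\<psi> x) * \<psi> x = complex_of_real ((cmod (\<psi> x))^2)"
      using complex_norm_square[of "\<psi> x"] by (simp add: mult.commute)
  qed
  thus ?thesis by simp
qed

lemma norm_inner_self: "norm (inner_q n \<psi> \<psi>) = (\<Sum>x\<in>basis n. (cmod (\<psi> x))^2)"
  by (simp only: inner_self norm_of_real) (simp add: sum_nonneg)

lemma imm_gen:
  assumes "(\<Sum>x\<in>basis n. (cmod (\<psi> x - \<psi> (fl i x)))^2) \<le> 2 * e * (\<Sum>x\<in>basis n. (cmod (\<psi> x))^2)"
  shows "norm (inner_q n \<psi> (E_op i S \<psi>)) \<ge> (1 - e) * norm (inner_q n \<psi> \<psi>)"
proof -
  let ?P = "flip_perm i S"
  define N where "N = (\<Sum>x\<in>basis n. (cmod (\<psi> x))^2)"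
  define D where "D = (\<Sum>x\<in>basis n. (cmod (\<psi> x - \<psi> (?P x)))^2)"
  have NP: "(\<Sum>x\<in>basis n. (cmod (\<psi> (?P x)))^2) = N"
    unfolding N_def by (rule sum.reindex_bij_witness[of _ ?P ?P]) (auto simp: basis_def)
  have "D = (\<Sum>x\<in>basis n. (cmod (\<psi> x))^2 + (cmod (\<psi> (?P x)))^2 - 2 * Re (cnj (\<psi> x) * \<psi> (?P x)))"
    unfolding D_def by (simp add: cmod_diff_sq)
  also have "\<dots> = N + N - 2 * Re (inner_q n \<psi> (E_op i S \<psi>))"
    by (simp add: sum.distrib sum_subtractf NP N_def inner_q_def E_op_def Re_sum sum_distrib_left)
  finally have Re: "Re (inner_q n \<psi> (E_op i S \<psi>)) = N - D / 2" by linarith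
  have "D \<le> (\<Sum>x\<in>basis n. (cmod (\<psi> x - \<psi> (fl i x)))^2)"
    unfolding D_def
  proof (rule sum_mono)
    fix x show "(cmod (\<psi> x - \<psi> (?P x)))^2 \<le> (cmod (\<psi> x - \<psi> (fl i x)))^2"
      using fp_cases[of i S x] by auto
  qed
  hence "D \<le> 2 * e * N" using assms N_def by simp
  hence "(1 - e) * N \<le> Re (inner_q n \<psi> (E_op i S \<psi>))" using Re by (simp add: algebra_simps)
  also have "\<dots> \<le> norm (inner_q n \<psi> (E_op i S \<psi>))" by (rule complex_Re_le_cmod)
  finally show ?thesis by (simp add: norm_inner_self N_def)
qed


definition Msp :: "nat \<Rightarrow> nat \<Rightarrow> nat \<Rightarrow> qvec set" where
  "Msp n m B = {\<psi>. \<exists>c. \<psi> = (\<lambda>x. \<Sum>T\<in>Pow {..<B}. c T * vT n m T x)}"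

lemma blk_sub: "j < B \<Longrightarrow> B*m \<le> n \<Longrightarrow> blk m j \<subseteq> {..<n}"
proof -
  assume "j < B" "B*m \<le> n"
  hence "(j+1)*m \<le> B*m" by (intro mult_le_mono1) simp
  thus "blk m j \<subseteq> {..<n}" using \<open>B*m \<le> n\<close> by (auto simp: blk_def)
qed

lemma blk_disj: "k \<in> blk m j \<Longrightarrow> k \<in> blk m j' \<Longrightarrow> j = j'"
proof (rule ccontr)
  assume a: "k \<in> blk m j" "k \<in> blk m j'" "j \<noteq> j'"
  { fix a b assume "k \<in> blk m a" "k \<in> blk m b" "a < b"
    hence "(a+1)*m \<le> b*m" by (intro mult_le_mono1) simp
    hence False using \<open>k \<in> blk m a\<close> \<open>k \<in> blk m b\<close> by (auto simp: blk_def) }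
  thus False using a by (cases "j < j'") (auto simp: not_less_iff_gr_or_eq)
qed

lemma ff_diff: assumes "i \<in> blk m j" "i < length x"
  shows "ff m j x - ff m j (fl i x) = 2 * sg i x"
proof -
  have "ff m j x - ff m j (fl i x) = (\<Sum>k\<in>blk m j. sg k x - sg k (fl i x))"
    by (simp add: ff_def sum_subtractf)
  also have "\<dots> = (\<Sum>k\<in>blk m j. if k = i then 2 * sg i x else 0)"
    using assms by (intro sum.cong refl) (auto simp: sg_fl_neq sg_fl_eq)
  also have "\<dots> = 2 * sg i x" using assms by (simp add: blk_def)
  finally show ?thesis .
qed

lemma vT_split: "j \<in> T \<Longrightarrow> finite T \<Longrightarrow>
   vT n m T x = complex_of_real (ff m j x) * vT n m (T - {j}) x"
  by (simp add: vT_def RT_def prod.remove)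

lemma cmod_add_sq: "(cmod (a + complex_of_real r * g))^2 = (cmod a)^2 + 2 * r * Re (cnj a * g) + r^2 * (cmod g)^2"
  by (simp only: cmod_power2) (simp add: power2_eq_square algebra_simps)

lemma block_bound:
  assumes m: "0 < m" and Bm: "B*m \<le> n" and j: "j < B" and i: "i \<in> blk m j" and psi: "\<psi> \<in> Msp n m B"
  shows "(\<Sum>x\<in>basis n. (cmod (\<psi> x - \<psi> (fl i x)))^2) \<le> 2 * (2 / real m) * (\<Sum>x\<in>basis n. (cmod (\<psi> x))^2)"
proof -
  obtain c where c: "\<psi> = (\<lambda>x. \<Sum>T\<in>Pow {..<B}. c T * vT n m T x)" using psi by (auto simp: Msp_def)
  define A where "A = (\<lambda>x. \<Sum>T\<in>Pow {..<B}. if j \<in> T then 0 else c T * vT n m T x)"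
  define G where "G = (\<lambda>x. \<Sum>T\<in>Pow {..<B}. if j \<in> T then c T * vT n m (T - {j}) x else 0)"
  have sub: "blk m j \<subseteq> {..<n}" using blk_sub[OF j Bm] .
  have iv: "invar k (vT n m T')" if "k \<in> blk m j" "j \<notin> T'" for k T'
    by (rule invar_vT) (use that blk_disj in blast)
  have ivA: "invar k A" if "k \<in> blk m j" for k
    using iv[OF that] unfolding invar_def A_def by (intro allI sum.cong refl) auto
  have ivG: "invar k G" if "k \<in> blk m j" for k
    using iv[OF that] unfolding invar_def G_def by (intro allI sum.cong refl) auto
  have dec: "\<psi> x = A x + complex_of_real (ff m j x) * G x" for x
  proof -
    have "\<psi> x = (\<Sum>T\<in>Pow {..<B}. (if j \<in> T then 0 else c T * vT n m T x) +
        complex_of_real (ff m j x) * (if j \<in> T then c T * vT n m (T - {j}) x else 0))"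
      unfolding c
    proof (intro sum.cong refl)
      fix T assume "T \<in> Pow {..<B}"
      hence "finite T" by (auto intro: finite_subset)
      thus "c T * vT n m T x = (if j \<in> T then 0 else c T * vT n m T x) +
        complex_of_real (ff m j x) * (if j \<in> T then c T * vT n m (T - {j}) x else 0)"
        using vT_split[of j T n m x] by auto
    qed
    thus ?thesis by (simp add: A_def G_def sum.distrib sum_distrib_left)
  qed
  define NG where "NG = (\<Sum>x\<in>basis n. (cmod (G x))^2)"
  define NA where "NA = (\<Sum>x\<in>basis n. (cmod (A x))^2)"
  have D: "(\<Sum>x\<in>basis n. (cmod (\<psi> x - \<psi> (fl i x)))^2) = 4 * NG"
  proof -
    have "(\<Sum>x\<in>basis n. (cmod (\<psi> x - \<psi> (fl i x)))^2) = (\<Sum>x\<in>basis n. 4 * (cmod (G x))^2)"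
    proof (intro sum.cong refl)
      fix x assume x: "x \<in> basis n"
      have il: "i < length x" using x i sub by (auto simp: basis_def)
      have "\<psi> x - \<psi> (fl i x) = complex_of_real (ff m j x - ff m j (fl i x)) * G x"
        using ivA[OF i] ivG[OF i] unfolding dec invar_def by (simp add: algebra_simps)
      also have "\<dots> = complex_of_real (2 * sg i x) * G x" using ff_diff[OF i il] by simp
      finally have "cmod (\<psi> x - \<psi> (fl i x)) = 2 * cmod (G x)"
        by (simp add: norm_mult abs_sg)
      thus "(cmod (\<psi> x - \<psi> (fl i x)))^2 = 4 * (cmod (G x))^2" by (simp add: power2_eq_square)
    qed
    thus ?thesis by (simp add: NG_def sum_distrib_left)
  qed
  have ivR: "invar k (\<lambda>x. Re (cnj (A x) * G x))" if "k \<in> blk m j" for k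
    using ivA[OF that] ivG[OF that] by (simp add: invar_def)
  have ivC: "invar k (\<lambda>x. (cmod (G x))^2)" if "k \<in> blk m j" for k
    using ivG[OF that] by (simp add: invar_def)
  have z: "(\<Sum>x\<in>basis n. ff m j x * Re (cnj (A x) * G x)) = 0"
    by (rule L2[OF sub]) (rule ivR)
  have q: "(\<Sum>x\<in>basis n. (ff m j x)^2 * (cmod (G x))^2) = real m * NG"
    unfolding NG_def by (rule L3[OF sub]) (rule ivC)
  have "(\<Sum>x\<in>basis n. (cmod (\<psi> x))^2) = (\<Sum>x\<in>basis n. (cmod (A x))^2 + 2 * (ff m j x * Re (cnj (A x) * G x)) + (ff m j x)^2 * (cmod (G x))^2)"
    by (intro sum.cong refl) (simp add: dec cmod_add_sq mult.assoc)
  also have "\<dots> = NA + real m * NG"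
    using z q by (simp add: sum.distrib NA_def sum_distrib_left[symmetric])
  finally have N: "(\<Sum>x\<in>basis n. (cmod (\<psi> x))^2) = NA + real m * NG" .
  have "NA \<ge> 0" unfolding NA_def by (simp add: sum_nonneg)
  hence "real m * NG \<le> (\<Sum>x\<in>basis n. (cmod (\<psi> x))^2)" using N by simp
  hence "NG \<le> (\<Sum>x\<in>basis n. (cmod (\<psi> x))^2) / real m" using m by (simp add: field_simps)
  thus ?thesis unfolding D by (simp add: field_simps)
qed

lemma nonblock_bound:
  assumes "\<And>j. j < B \<Longrightarrow> i \<notin> blk m j" and psi: "\<psi> \<in> Msp n m B" and m: "0 < m"
  shows "(\<Sum>x\<in>basis n. (cmod (\<psi> x - \<psi> (fl i x)))^2) \<le> 2 * (2 / real m) * (\<Sum>x\<in>basis n. (cmod (\<psi> x))^2)"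
proof -
  obtain c where c: "\<psi> = (\<lambda>x. \<Sum>T\<in>Pow {..<B}. c T * vT n m T x)" using psi by (auto simp: Msp_def)
  have "invar i (vT n m T)" if "T \<in> Pow {..<B}" for T
    by (rule invar_vT) (use that assms(1) in auto)
  hence "\<psi> (fl i x) = \<psi> x" for x unfolding c invar_def by (intro sum.cong refl) auto
  hence "(\<Sum>x\<in>basis n. (cmod (\<psi> x - \<psi> (fl i x)))^2) = 0" by simp
  thus ?thesis using m by (simp add: sum_nonneg)
qed


lemma orth1:
  assumes m: "B*m \<le> n" and T: "T \<subseteq> {..<B}" and T': "T' \<subseteq> {..<B}" and j: "j \<in> T" "j \<notin> T'"
  shows "(\<Sum>x\<in>basis n. RT m T x * RT m T' x) = 0"
proof -
  have fT: "finite T" using T by (auto intro: finite_subset)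
  have jB: "j < B" using T j by auto
  have "(\<Sum>x\<in>basis n. RT m T x * RT m T' x) = (\<Sum>x\<in>basis n. ff m j x * (RT m (T - {j}) x * RT m T' x))"
    by (intro sum.cong refl) (simp add: RT_def prod.remove[OF fT j(1)] mult.assoc)
  also have "\<dots> = 0"
  proof (rule L2[OF blk_sub[OF jB m]])
    fix k assume k: "k \<in> blk m j"
    show "invar k (\<lambda>x. RT m (T - {j}) x * RT m T' x)"
      by (intro invar_mult invar_RT) (use k j blk_disj in blast)+
  qed
  finally show ?thesis .
qed

lemma orth:
  assumes "B*m \<le> n" "T \<subseteq> {..<B}" "T' \<subseteq> {..<B}" "T \<noteq> T'"
  shows "(\<Sum>x\<in>basis n. RT m T x * RT m T' x) = 0"
proof -
  obtain j where "(j \<in> T \<and> j \<notin> T') \<or> (j \<in> T' \<and> j \<notin> T)" using assms(4) by blast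
  thus ?thesis
  proof
    assume "j \<in> T \<and> j \<notin> T'" thus ?thesis using orth1[OF assms(1-3)] by blast
  next
    assume "j \<in> T' \<and> j \<notin> T"
    hence "(\<Sum>x\<in>basis n. RT m T' x * RT m T x) = 0" using orth1[OF assms(1) assms(3) assms(2)] by blast
    thus ?thesis by (simp add: mult.commute)
  qed
qed

lemma pos:
  assumes m: "0 < m" "B*m \<le> n" and T: "T \<subseteq> {..<B}"
  shows "0 < (\<Sum>x\<in>basis n. RT m T x * RT m T x)"
proof (rule sum_pos2[OF finite_basis])
  let ?x = "replicate n False"
  show "?x \<in> basis n" by (simp add: basis_def)
  have "ff m j ?x = real m" if "j \<in> T" for j
  proof -
    have "blk m j \<subseteq> {..<n}" using blk_sub[OF _ m(2)] that T by auto
    hence "ff m j ?x = (\<Sum>k\<in>blk m j. 1)" unfolding ff_def by (intro sum.cong refl) (auto simp: sg_def)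
    thus ?thesis by (simp add: blk_def)
  qed
  hence "RT m T ?x = real m ^ card T" by (simp add: RT_def)
  thus "0 < RT m T ?x * RT m T ?x" using m by simp
qed (simp)

lemma inner_vT: "(\<Sum>x\<in>basis n. cnj (vT n m T x) * vT n m T' x) = complex_of_real (\<Sum>x\<in>basis n. RT m T x * RT m T' x)"
  by (simp add: vT_def basis_def)

lemma subspace: "is_subspace n (Msp n m B)"
  unfolding is_subspace_def
proof (intro conjI ballI allI)
  fix \<phi> assume "\<phi> \<in> Msp n m B" thus "is_qvec n \<phi>" by (auto simp: Msp_def is_qvec_def vT_def)
next
  show "(\<lambda>_. 0) \<in> Msp n m B" unfolding Msp_def by (intro CollectI exI[of _ "\<lambda>_. 0"]) simp
next
  fix \<phi> \<psi> assume "\<phi> \<in> Msp n m B" "\<psi> \<in> Msp n m B"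
  then obtain c d where "\<phi> = (\<lambda>x. \<Sum>T\<in>Pow {..<B}. c T * vT n m T x)" "\<psi> = (\<lambda>x. \<Sum>T\<in>Pow {..<B}. d T * vT n m T x)"
    by (auto simp: Msp_def)
  thus "(\<lambda>x. \<phi> x + \<psi> x) \<in> Msp n m B" unfolding Msp_def
    by (intro CollectI exI[of _ "\<lambda>T. c T + d T"]) (simp add: sum.distrib distrib_right)
next
  fix a \<phi> assume "\<phi> \<in> Msp n m B"
  then obtain c where "\<phi> = (\<lambda>x. \<Sum>T\<in>Pow {..<B}. c T * vT n m T x)" by (auto simp: Msp_def)
  thus "(\<lambda>x. a * \<phi> x) \<in> Msp n m B" unfolding Msp_def
    by (intro CollectI exI[of _ "\<lambda>T. a * c T"]) (simp add: sum_distrib_left mult.assoc)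
qed

lemma dim:
  assumes m: "0 < m" "B*m \<le> n"
  shows "dim_at_least n (Msp n m B) (2^B)"
proof -
  have "card (Pow {..<B}) = 2^B" by (simp add: card_Pow)
  then obtain h where h: "bij_betw h {..<(2::nat)^B} (Pow {..<B})"
    using ex_bij_betw_nat_finite[of "Pow {..<B}"] by (auto simp: atLeast0LessThan)
  have hin: "h i \<in> Pow {..<B}" if "i < (2::nat)^B" for i using h that by (auto simp: bij_betw_def)
  have hinj: "h i = h i' \<longleftrightarrow> i = i'" if "i < (2::nat)^B" "i' < (2::nat)^B" for i i'
    using h that by (auto simp: bij_betw_def inj_on_def)
  show ?thesis unfolding dim_at_least_def
  proof (intro exI[of _ "\<lambda>i. vT n m (h i)"] conjI allI impI)
    fix i :: nat assume i: "i < (2::nat)^B"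
    have hi: "h i \<in> Pow {..<B}" using hin[OF i] .
    have "vT n m (h i) x = (\<Sum>T\<in>Pow {..<B}. (if T = h i then 1 else 0) * vT n m T x)" for x
    proof -
      have "(\<Sum>T\<in>Pow {..<B}. (if T = h i then 1 else 0) * vT n m T x) = (\<Sum>T\<in>Pow {..<B}. if T = h i then vT n m T x else 0)"
        by (intro sum.cong refl) auto
      also have "\<dots> = vT n m (h i) x" using hi by (simp add: sum.delta')
      finally show ?thesis by simp
    qed
    thus "vT n m (h i) \<in> Msp n m B" unfolding Msp_def
      by (intro CollectI exI[of _ "\<lambda>T. if T = h i then 1 else 0"]) (rule ext)
  next
    fix c :: "nat \<Rightarrow> complex" and i0 :: nat
    assume hyp: "\<forall>x\<in>basis n. (\<Sum>i<2^B. c i * vT n m (h i) x) = 0" and i0: "i0 < (2::nat)^B"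
    define Q where "Q = (\<Sum>x\<in>basis n. RT m (h i0) x * RT m (h i0) x)"
    have Q: "0 < Q" unfolding Q_def using pos[OF m, of "h i0"] hin[OF i0] by auto
    have "0 = (\<Sum>x\<in>basis n. cnj (vT n m (h i0) x) * (\<Sum>i<2^B. c i * vT n m (h i) x))"
      using hyp by simp
    also have "\<dots> = (\<Sum>i<2^B. c i * (\<Sum>x\<in>basis n. cnj (vT n m (h i0) x) * vT n m (h i) x))"
      by (simp add: sum_distrib_left sum_distrib_right sum.swap[of _ "basis n"] mult_ac)
    also have "\<dots> = (\<Sum>i<2^B. if i = i0 then c i * complex_of_real Q else 0)"
    proof (intro sum.cong refl)
      fix i :: nat assume "i \<in> {..<2^B}"
      hence i: "i < (2::nat)^B" by simp
      show "c i * (\<Sum>x\<in>basis n. cnj (vT n m (h i0) x) * vT n m (h i) x) = (if i = i0 then c i * complex_of_real Q else 0)"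
      proof (cases "i = i0")
        case True thus ?thesis unfolding inner_vT Q_def by simp
      next
        case False
        hence "h i0 \<noteq> h i" using hinj[OF i i0] by auto
        hence "(\<Sum>x\<in>basis n. RT m (h i0) x * RT m (h i) x) = 0"
          using orth[OF m(2), of "h i0" "h i"] hin[OF i] hin[OF i0] by auto
        thus ?thesis unfolding inner_vT using False by simp
      qed
    qed
    also have "\<dots> = c i0 * complex_of_real Q" using i0 by simp
    finally show "c i0 = 0" using Q by simp
  qed
qed


lemma immune_Msp:
  assumes m: "0 < m" "B*m \<le> n"
  shows "immune n (E_bitflip n) (2 / real m) (Msp n m B)"
  unfolding immune_def
proof (intro ballI)
  fix X \<psi> assume X: "X \<in> E_bitflip n" and psi: "\<psi> \<in> Msp n m B"
  then obtain i S where XS: "X = E_op i S" "i < n" by (auto simp: E_bitflip_def)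
  have "(\<Sum>x\<in>basis n. (cmod (\<psi> x - \<psi> (fl i x)))^2) \<le> 2 * (2 / real m) * (\<Sum>x\<in>basis n. (cmod (\<psi> x))^2)"
  proof (cases "\<exists>j<B. i \<in> blk m j")
    case True
    then obtain j where "j < B" "i \<in> blk m j" by blast
    thus ?thesis using block_bound[OF m(1) m(2) _ _ psi] by blast
  next
    case False thus ?thesis using nonblock_bound[OF _ psi m(1)] by blast
  qed
  thus "(1 - 2 / real m) * cmod (inner_q n \<psi> \<psi>) \<le> cmod (inner_q n \<psi> (X \<psi>))"
    unfolding XS by (rule imm_gen)
qed

theorem theorem3:
  shows "\<exists>C::real. \<forall>n B::nat. 0 < B \<and> B < n \<longrightarrow>
    (\<exists>M \<epsilon>. is_subspace n M \<and> dim_at_least n M (2 ^ B) \<and>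
       immune n (E_bitflip n) \<epsilon> M \<and> \<epsilon> \<le> C * real B * ln (real n) / real n)"
proof (intro exI[of _ "4 / ln 2"] allI impI)
  fix n B :: nat assume nB: "0 < B \<and> B < n"
  define m where "m = n div B"
  have m0: "0 < m" using nB by (simp add: m_def div_greater_zero_iff)
  have Bm: "B*m \<le> n" by (simp add: m_def)
  have nle: "n \<le> 2*B*m"
  proof -
    have "n = B*m + n mod B" by (simp add: m_def)
    moreover have "n mod B < B" using nB by simp
    moreover have "B \<le> B*m" using m0 by simp
    ultimately show ?thesis by linarith
  qed
  have "2 / real m \<le> 4 / ln 2 * real B * ln (real n) / real n"
  proof -
    have l2: "0 < ln (2::real)" by simp
    have ln: "ln 2 \<le> ln (real n)" using nB by simp
    have n0: "0 < real n" using nB by simp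
    have "real n \<le> 2 * real B * real m" using nle by (metis of_nat_le_iff of_nat_mult of_nat_numeral)
    hence "2 / real m \<le> 4 * real B / real n" using m0 n0 by (simp add: field_simps)
    also have "\<dots> \<le> 4 * real B / real n * (ln (real n) / ln 2)"
      using ln l2 n0 by (intro mult_le_cancel_left1[THEN iffD2] ; simp add: field_simps)
    also have "\<dots> = 4 / ln 2 * real B * ln (real n) / real n" by (simp add: field_simps)
    finally show ?thesis .
  qed
  thus "\<exists>M \<epsilon>. is_subspace n M \<and> dim_at_least n M (2 ^ B) \<and>
       immune n (E_bitflip n) \<epsilon> M \<and> \<epsilon> \<le> 4 / ln 2 * real B * ln (real n) / real n"
    using subspace[of n m B] dim[OF m0 Bm] immune_Msp[OF m0 Bm] by blast
qed

end
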